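(* Let $X_1,\dots,X_n$ be independent standard normal random variables and $a_1,\dots,a_n\in\mathbb{R}$, and $p\ge1$ an integer. Then $$\mathbb{E}\Big(\sum_{i=1}^n a_iX_i^2\Big)^p=\frac{p!}{2^p}\sum_{\lambda\vdash p}\Big(\prod_{k\in\lambda}\binom{2k}{k}\Big)m_\lambda(a_1,\dots,a_n),$$ where the sum is over all integer partitions $\lambda$ of $p$ and the product is over the parts $k$ of $\lambda$ (with multiplicity).
   Context: For a partition $\lambda$, $m_\lambda(a_1,\dots,a_n)$ is the monomial symmetric polynomial: the sum of all distinct monomials $a_{1}^{k_1}\cdots a_n^{k_n}$ whose multiset of nonzero exponents equals the multiset of parts of $\lambda$ (it is $0$ if $\lambda$ has more than $n$ parts). *)

theory Defs
  imports "HOL-Probability.Probability" "HOL-Library.Multiset"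
begin

definition int_partitions :: "nat \<Rightarrow> nat multiset set" where
  "int_partitions p = {lam. (\<forall>k\<in>#lam. 0 < k) \<and> sum_mset lam = p}"

definition monomial_sym :: "nat \<Rightarrow> (nat \<Rightarrow> real) \<Rightarrow> nat multiset \<Rightarrow> real" where
  "monomial_sym n a lam =
     (\<Sum>e\<in>{e :: nat \<Rightarrow> nat. (\<forall>i. n \<le> i \<longrightarrow> e i = 0) \<and>
            filter_mset (\<lambda>x. x \<noteq> 0) (image_mset e (mset_set {..<n})) = lam}.
        \<Prod>i<n. a i ^ e i)"

end

theory Submission
  imports Defs
begin


definition Eset :: "nat \<Rightarrow> nat \<Rightarrow> (nat \<Rightarrow> nat) set" where
  "Eset n p = {e. (\<forall>i. n \<le> i \<longrightarrow> e i = 0) \<and> (\<Sum>i<n. e i) = p}"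

definition Gw :: "(nat \<Rightarrow> real) \<Rightarrow> nat \<Rightarrow> (nat \<Rightarrow> nat) \<Rightarrow> real" where
  "Gw a n e = (\<Prod>i<n. a i ^ e i * real ((2 * e i) choose (e i)))"

fun Fr :: "(nat \<Rightarrow> real) \<Rightarrow> nat \<Rightarrow> nat \<Rightarrow> real" where
  "Fr a 0 p = (if p = 0 then 1 else 0)"
| "Fr a (Suc n) p = (\<Sum>k\<le>p. Fr a n k * (a n ^ (p - k) * real ((2 * (p - k)) choose (p - k))))"

lemma finite_Eset: "finite (Eset n p)"
proof -
  have "Eset n p \<subseteq> {f. \<forall>x. (x \<in> {..<n} \<longrightarrow> f x \<in> {..p}) \<and> (x \<notin> {..<n} \<longrightarrow> f x = 0)}"
  proof
    fix e assume "e \<in> Eset n p"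
    then have e0: "\<forall>i. n \<le> i \<longrightarrow> e i = 0" and es: "(\<Sum>i<n. e i) = p" by (auto simp: Eset_def)
    have "\<And>x. x < n \<Longrightarrow> e x \<le> p" using member_le_sum[of _ "{..<n}" e] es by auto
    then show "e \<in> {f. \<forall>x. (x \<in> {..<n} \<longrightarrow> f x \<in> {..p}) \<and> (x \<notin> {..<n} \<longrightarrow> f x = 0)}"
      using e0 by auto
  qed
  moreover have "finite {f. \<forall>x. (x \<in> {..<n} \<longrightarrow> f x \<in> {..p}) \<and> (x \<notin> {..<n} \<longrightarrow> f x = (0::nat))}"
    by (rule finite_set_of_finite_funs) auto
  ultimately show ?thesis by (rule finite_subset)
qed

lemma Eset_0: "Eset 0 p = (if p = 0 then {\<lambda>_. 0} else {})"
  by (auto simp: Eset_def)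

lemma Gw_cong: "(\<And>i. i < n \<Longrightarrow> e i = e' i) \<Longrightarrow> Gw a n e = Gw a n e'"
  unfolding Gw_def by (intro prod.cong) auto

lemma Fr_Eset: "Fr a n p = (\<Sum>e\<in>Eset n p. Gw a n e)"
proof (induction n arbitrary: p)
  case 0
  then show ?case by (simp add: Eset_0 Gw_def)
next
  case (Suc n)
  have "Fr a (Suc n) p = (\<Sum>k\<le>p. \<Sum>e\<in>Eset n k. Gw a n e * (a n ^ (p - k) * real ((2 * (p - k)) choose (p - k))))"
    by (simp add: Suc.IH sum_distrib_right)
  also have "\<dots> = (\<Sum>(k,e)\<in>Sigma {..p} (Eset n). Gw a n e * (a n ^ (p - k) * real ((2 * (p - k)) choose (p - k))))"
    by (rule sum.Sigma) (auto simp: finite_Eset)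
  also have "\<dots> = (\<Sum>e\<in>Eset (Suc n) p. Gw a (Suc n) e)"
  proof (rule sum.reindex_bij_witness[where i="\<lambda>e. (p - e n, e(n:=0))" and j="\<lambda>(k,e). e(n:=p-k)"])
    fix ke assume "ke \<in> Sigma {..p} (Eset n)"
    then obtain k e where ke: "ke = (k,e)" "k \<le> p" "e \<in> Eset n k" by auto
    then have e0: "\<And>i. n \<le> i \<Longrightarrow> e i = 0" and es: "(\<Sum>i<n. e i) = k" by (auto simp: Eset_def)
    have s: "(\<Sum>i<n. (e(n := p - k)) i) = k" using es by (intro trans[OF sum.cong es]) auto
    show "(\<lambda>e. (p - e n, e(n := 0))) ((\<lambda>(k, e). e(n := p - k)) ke) = ke"
      using ke e0 by (auto simp: fun_eq_iff)
    show "(\<lambda>(k, e). e(n := p - k)) ke \<in> Eset (Suc n) p"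
      using ke e0 s by (auto simp: Eset_def)
    have "Gw a (Suc n) (e(n := p - k)) = Gw a n (e(n := p - k)) * (a n ^ (p - k) * real ((2 * (p - k)) choose (p - k)))"
      by (simp add: Gw_def)
    also have "Gw a n (e(n := p - k)) = Gw a n e" by (rule Gw_cong) auto
    finally have GG: "Gw a (Suc n) (e(n := p - k)) = Gw a n e * (a n ^ (p - k) * real ((2 * (p - k)) choose (p - k)))" .
    show "(\<lambda>e. Gw a (Suc n) e) ((\<lambda>(k, e). e(n := p - k)) ke) =
         (case ke of (k, e) \<Rightarrow> Gw a n e * (a n ^ (p - k) * real (2 * (p - k) choose (p - k))))"
      using ke GG by (simp only: prod.case)
  next
    fix e assume "e \<in> Eset (Suc n) p"
    then have e0: "\<And>i. Suc n \<le> i \<Longrightarrow> e i = 0" and es: "(\<Sum>i<n. e i) + e n = p" by (auto simp: Eset_def)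
    have s: "(\<Sum>i<n. (e(n := 0)) i) = (\<Sum>i<n. e i)" by (intro sum.cong) auto
    show "(\<lambda>(k, e). e(n := p - k)) ((\<lambda>e. (p - e n, e(n := 0))) e) = e"
      using es by (auto simp: fun_eq_iff)
    show "(\<lambda>e. (p - e n, e(n := 0))) e \<in> Sigma {..p} (Eset n)"
      using e0 es s by (auto simp: Eset_def)
  qed
  finally show ?case .
qed


lemma sum_filter_nz: "sum_mset (filter_mset (\<lambda>x. x \<noteq> 0) (M::nat multiset)) = sum_mset M"
  by (induction M) auto
lemma prod_img: "prod_mset (image_mset f (image_mset (e::nat\<Rightarrow>nat) (mset_set A))) = (\<Prod>i\<in>A. f (e i)::real)"
  by (simp add: prod_unfold_prod_mset multiset.map_comp comp_def)
lemma size_le_sum: "(\<forall>k\<in>#M. 0 < k) \<Longrightarrow> size M \<le> sum_mset (M::nat multiset)"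
  by (induction M) auto
lemma mem_le_sum: "x \<in># M \<Longrightarrow> x \<le> sum_mset (M::nat multiset)"
  by (induction M) auto
lemma prod_filter_nz: "prod_mset (image_mset (\<lambda>k. real ((2*k) choose k)) (filter_mset (\<lambda>x. x \<noteq> 0) (M::nat multiset)))
   = prod_mset (image_mset (\<lambda>k. real ((2*k) choose k)) M)"
  by (induction M) auto
lemma finite_parts: "finite (int_partitions p)"
proof -
  have "int_partitions p \<subseteq> (\<Union>s\<in>{..p}. multisets_of_size {..p} s)"
    using size_le_sum mem_le_sum by (fastforce simp: int_partitions_def multisets_of_size_def)
  then show ?thesis by (rule finite_subset) auto
qed

definition Lm :: "nat \<Rightarrow> (nat \<Rightarrow> nat) \<Rightarrow> nat multiset" where
  "Lm n e = filter_mset (\<lambda>x. x \<noteq> 0) (image_mset e (mset_set {..<n}))"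

lemma Lm_sum: "sum_mset (Lm n e) = (\<Sum>i<n. e i)"
  unfolding Lm_def sum_filter_nz by (simp add: sum_unfold_sum_mset)

lemma Lm_prod: "(\<Prod>k\<in>#Lm n e. real ((2*k) choose k)) = (\<Prod>i<n. real ((2 * e i) choose (e i)))"
  unfolding Lm_def prod_filter_nz prod_img ..

lemma Gw_split: "Gw a n e = (\<Prod>k\<in>#Lm n e. real ((2*k) choose k)) * (\<Prod>i<n. a i ^ e i)"
  by (simp add: Gw_def Lm_prod prod.distrib)

lemma Lm_part: "e \<in> Eset n p \<Longrightarrow> Lm n e \<in> int_partitions p"
  by (auto simp: int_partitions_def Lm_sum Eset_def) (auto simp: Lm_def)

lemma mono_sym_eq: "lam \<in> int_partitions p \<Longrightarrow>
   monomial_sym n a lam = (\<Sum>e\<in>{e\<in>Eset n p. Lm n e = lam}. \<Prod>i<n. a i ^ e i)"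
  unfolding monomial_sym_def
proof (intro sum.cong refl)
  assume "lam \<in> int_partitions p"
  then have "sum_mset lam = p" by (simp add: int_partitions_def)
  then show "{e. (\<forall>i. n \<le> i \<longrightarrow> e i = 0) \<and> filter_mset (\<lambda>x. x \<noteq> 0) (image_mset e (mset_set {..<n})) = lam}
     = {e \<in> Eset n p. Lm n e = lam}"
    using Lm_sum unfolding Lm_def[symmetric] by (auto simp: Eset_def)
qed

lemma comb_main: "(\<Sum>e\<in>Eset n p. Gw a n e) =
   (\<Sum>lam\<in>int_partitions p. (\<Prod>k\<in>#lam. real ((2 * k) choose k)) * monomial_sym n a lam)"
proof -
  have "(\<Sum>e\<in>Eset n p. Gw a n e) = (\<Sum>lam\<in>int_partitions p. \<Sum>e\<in>{e\<in>Eset n p. Lm n e = lam}. Gw a n e)"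
    by (rule sum.group[symmetric]) (auto simp: finite_Eset finite_parts Lm_part)
  also have "\<dots> = (\<Sum>lam\<in>int_partitions p. (\<Prod>k\<in>#lam. real ((2 * k) choose k)) * monomial_sym n a lam)"
  proof (intro sum.cong refl)
    fix lam assume "lam \<in> int_partitions p"
    then show "(\<Sum>e\<in>{e\<in>Eset n p. Lm n e = lam}. Gw a n e) = (\<Prod>k\<in>#lam. real ((2 * k) choose k)) * monomial_sym n a lam"
      by (simp add: mono_sym_eq sum_distrib_left Gw_split)
  qed
  finally show ?thesis .
qed


lemma moment_Y:
  fixes M :: "'a measure" and Y :: "'a \<Rightarrow> real"
  assumes "distributed M lborel Y std_normal_density"
  shows "integrable M (\<lambda>\<omega>. (c * (Y \<omega>)\<^sup>2) ^ m)"
    and "integral\<^sup>L M (\<lambda>\<omega>. (c * (Y \<omega>)\<^sup>2) ^ m) = c ^ m * (fact (2*m) / (2^m * fact m))"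
proof -
  have eq: "\<And>x::real. (c * x\<^sup>2) ^ m = c ^ m * x ^ (2 * m)"
    by (simp add: power_mult_distrib power_mult)
  have nn: "\<And>x. 0 \<le> std_normal_density x" by (simp add: normal_density_nonneg)
  have "integrable lborel (\<lambda>x. std_normal_density x * (c * x\<^sup>2) ^ m)"
    unfolding eq using integrable_std_normal_moment[of "2*m"]
    by (simp add: mult.left_commute[of _ "c^m"])
  then show "integrable M (\<lambda>\<omega>. (c * (Y \<omega>)\<^sup>2) ^ m)"
    using distributed_integrable[OF assms, of "\<lambda>x. (c * x\<^sup>2) ^ m"] nn by simp
  have "integral\<^sup>L M (\<lambda>\<omega>. (c * (Y \<omega>)\<^sup>2) ^ m) = integral\<^sup>L lborel (\<lambda>x. std_normal_density x * (c * x\<^sup>2) ^ m)"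
    using distributed_integral[OF assms, of "\<lambda>x. (c * x\<^sup>2) ^ m"] nn by simp
  also have "\<dots> = c ^ m * integral\<^sup>L lborel (\<lambda>x. std_normal_density x * x ^ (2 * m))"
    unfolding eq by (simp add: mult.left_commute[of _ "c^m"])
  finally show "integral\<^sup>L M (\<lambda>\<omega>. (c * (Y \<omega>)\<^sup>2) ^ m) = c ^ m * (fact (2*m) / (2^m * fact m))"
    by (simp add: integral_std_normal_moment_even)
qed

lemma (in prob_space) indep_sq_sum:
  fixes X :: "nat \<Rightarrow> 'a \<Rightarrow> real"
  assumes indep: "indep_vars (\<lambda>_. borel) X {..<Suc n}"
  shows "indep_var borel (X n) borel (\<lambda>\<omega>. \<Sum>i<n. a i * (X i \<omega>)\<^sup>2)"
proof -
  have "indep_var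
    borel ((\<lambda>f. f n) \<circ> (\<lambda>\<omega>. restrict (\<lambda>i. X i \<omega>) {n}))
    borel ((\<lambda>f. \<Sum>i<n. a i * (f i)\<^sup>2) \<circ> (\<lambda>\<omega>. restrict (\<lambda>i. X i \<omega>) {..<n}))"
    by (intro indep_var_compose[OF indep_var_restrict[OF indep]]) auto
  also have "((\<lambda>f. f n) \<circ> (\<lambda>\<omega>. restrict (\<lambda>i. X i \<omega>) {n})) = X n"
    by auto
  also have "((\<lambda>f. \<Sum>i<n. a i * (f i)\<^sup>2) \<circ> (\<lambda>\<omega>. restrict (\<lambda>i. X i \<omega>) {..<n})) = (\<lambda>\<omega>. \<Sum>i<n. a i * (X i \<omega>)\<^sup>2)"
    by (auto simp: fun_eq_iff)
  finally show ?thesis .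
qed

lemma coef_arith:
  fixes F c :: real
  assumes "k \<le> p"
  shows "real (p choose k) * (fact k / 2 ^ k * F) * (c ^ (p - k) * (fact (2 * (p - k)) / (2 ^ (p - k) * fact (p - k))))
     = fact p / 2 ^ p * (F * (c ^ (p - k) * real ((2 * (p - k)) choose (p - k))))"
proof -
  have b1: "real (p choose k) = fact p / (fact k * fact (p - k))" using binomial_fact[OF assms] by simp
  have b2: "real ((2 * (p - k)) choose (p - k)) = fact (2 * (p - k)) / (fact (p - k) * fact (p - k))"
    using binomial_fact[of "p-k" "2*(p-k)"] by (simp add: mult_2)
  have pw: "(2::real) ^ p = 2 ^ k * 2 ^ (p - k)" using assms by (simp add: power_add[symmetric])
  show ?thesis unfolding b1 b2 pw by (simp add: field_simps)
qed

lemma (in prob_space) moments_main: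
  fixes X :: "nat \<Rightarrow> 'a \<Rightarrow> real"
  assumes "indep_vars (\<lambda>_. borel) X {..<n}"
    and "\<And>i. i < n \<Longrightarrow> distributed M lborel (X i) std_normal_density"
  shows "integrable M (\<lambda>\<omega>. (\<Sum>i<n. a i * (X i \<omega>)\<^sup>2) ^ p) \<and>
         integral\<^sup>L M (\<lambda>\<omega>. (\<Sum>i<n. a i * (X i \<omega>)\<^sup>2) ^ p) = fact p / 2 ^ p * Fr a n p"
  using assms
proof (induction n arbitrary: p)
  case 0
  then show ?case by (simp add: prob_space)
next
  case (Suc n)
  have ind: "indep_vars (\<lambda>_. borel) X {..<n}"
    using indep_vars_subset[OF Suc.prems(1)] by auto
  have IH: "\<And>k. integrable M (\<lambda>\<omega>. (\<Sum>i<n. a i * (X i \<omega>)\<^sup>2) ^ k) \<and>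
         integral\<^sup>L M (\<lambda>\<omega>. (\<Sum>i<n. a i * (X i \<omega>)\<^sup>2) ^ k) = fact k / 2 ^ k * Fr a n k"
    using Suc.IH[OF ind] Suc.prems(2) by auto
  define S where "S = (\<lambda>\<omega>. \<Sum>i<n. a i * (X i \<omega>)\<^sup>2)"
  define Y where "Y = (\<lambda>\<omega>. a n * (X n \<omega>)\<^sup>2)"
  have dn: "distributed M lborel (X n) std_normal_density" using Suc.prems(2) by auto
  have iv: "indep_var borel (X n) borel S"
    unfolding S_def by (rule indep_sq_sum[OF Suc.prems(1)])
  have iv2: "\<And>k m. indep_var borel (\<lambda>\<omega>. Y \<omega> ^ m) borel (\<lambda>\<omega>. S \<omega> ^ k)"
  proof -
    fix k m
    have "indep_var borel ((\<lambda>x. (a n * x\<^sup>2) ^ m) \<circ> X n) borel ((\<lambda>s. s ^ k) \<circ> S)"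
      by (rule indep_var_compose[OF iv]) auto
    then show "indep_var borel (\<lambda>\<omega>. Y \<omega> ^ m) borel (\<lambda>\<omega>. S \<omega> ^ k)"
      by (simp add: comp_def Y_def)
  qed
  have intS: "\<And>k. integrable M (\<lambda>\<omega>. S \<omega> ^ k)" and eS: "\<And>k. integral\<^sup>L M (\<lambda>\<omega>. S \<omega> ^ k) = fact k / 2 ^ k * Fr a n k"
    using IH unfolding S_def by auto
  have intY: "\<And>m. integrable M (\<lambda>\<omega>. Y \<omega> ^ m)"
    and eY: "\<And>m. integral\<^sup>L M (\<lambda>\<omega>. Y \<omega> ^ m) = a n ^ m * (fact (2*m) / (2^m * fact m))"
    unfolding Y_def using moment_Y[OF dn] by auto
  have intSY: "\<And>k m. integrable M (\<lambda>\<omega>. S \<omega> ^ k * Y \<omega> ^ m)"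
    using indep_var_integrable[OF iv2 intY intS] by (simp add: mult.commute)
  have eSY: "\<And>k m. integral\<^sup>L M (\<lambda>\<omega>. S \<omega> ^ k * Y \<omega> ^ m) = integral\<^sup>L M (\<lambda>\<omega>. S \<omega> ^ k) * integral\<^sup>L M (\<lambda>\<omega>. Y \<omega> ^ m)"
    using indep_var_lebesgue_integral[OF iv2 intY intS] by (simp add: mult.commute)
  have expand: "(\<lambda>\<omega>. (\<Sum>i<Suc n. a i * (X i \<omega>)\<^sup>2) ^ p) =
      (\<lambda>\<omega>. \<Sum>k\<le>p. real (p choose k) * (S \<omega> ^ k * Y \<omega> ^ (p - k)))"
    by (simp add: S_def Y_def binomial_ring mult.assoc)
  show ?case unfolding expand
  proof
    show "integrable M (\<lambda>\<omega>. \<Sum>k\<le>p. real (p choose k) * (S \<omega> ^ k * Y \<omega> ^ (p - k)))"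
      using intSY by auto
    have "integral\<^sup>L M (\<lambda>\<omega>. \<Sum>k\<le>p. real (p choose k) * (S \<omega> ^ k * Y \<omega> ^ (p - k)))
       = (\<Sum>k\<le>p. real (p choose k) * integral\<^sup>L M (\<lambda>\<omega>. S \<omega> ^ k * Y \<omega> ^ (p - k)))"
      using intSY by (simp add: integral_sum)
    also have "\<dots> = (\<Sum>k\<le>p. fact p / 2 ^ p * (Fr a n k * (a n ^ (p - k) * real ((2 * (p - k)) choose (p - k)))))"
    proof (intro sum.cong refl)
      fix k assume "k \<in> {..p}"
      then have kp: "k \<le> p" by simp
      show "real (p choose k) * integral\<^sup>L M (\<lambda>\<omega>. S \<omega> ^ k * Y \<omega> ^ (p - k)) =
         fact p / 2 ^ p * (Fr a n k * (a n ^ (p - k) * real ((2 * (p - k)) choose (p - k))))"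
        unfolding eSY eS eY using coef_arith[OF kp, of "Fr a n k" "a n"] by simp
    qed
    also have "\<dots> = fact p / 2 ^ p * Fr a (Suc n) p"
      by (simp add: sum_distrib_left)
    finally show "integral\<^sup>L M (\<lambda>\<omega>. \<Sum>k\<le>p. real (p choose k) * (S \<omega> ^ k * Y \<omega> ^ (p - k))) = fact p / 2 ^ p * Fr a (Suc n) p" .
  qed
qed

theorem lemma4p1:
  fixes M :: "'a measure" and X :: "nat \<Rightarrow> 'a \<Rightarrow> real" and a :: "nat \<Rightarrow> real"
    and n p :: nat
  assumes "prob_space M"
    and "prob_space.indep_vars M (\<lambda>_. borel) X {..<n}"
    and "\<And>i. i < n \<Longrightarrow> distributed M lborel (X i) std_normal_density"
    and "1 \<le> p"
  shows "integral\<^sup>L M (\<lambda>\<omega>. (\<Sum>i<n. a i * (X i \<omega>)\<^sup>2) ^ p) =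
         fact p / 2 ^ p *
         (\<Sum>lam\<in>int_partitions p.
            (\<Prod>k\<in>#lam. real ((2 * k) choose k)) * monomial_sym n a lam)"
  proof -
  interpret prob_space M by (rule assms(1))
  have "integral\<^sup>L M (\<lambda>\<omega>. (\<Sum>i<n. a i * (X i \<omega>)\<^sup>2) ^ p) = fact p / 2 ^ p * Fr a n p"
    using moments_main[OF assms(2,3)] by blast
  also have "Fr a n p = (\<Sum>lam\<in>int_partitions p. (\<Prod>k\<in>#lam. real ((2 * k) choose k)) * monomial_sym n a lam)"
    by (simp add: Fr_Eset comb_main)
  finally show ?thesis .
qed

end
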